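(* Consider the model $y_{it}=x_{it}'\theta^0_{k_i^0}+\varepsilon_{it}$ described in the context and suppose Assumptions 1 and 2 (stated in the context) hold. Then for $\eta>0$ small enough and for all $\delta>0$, $$\sup_{\boldsymbol\theta\in\mathcal N_\eta}\frac1N\sum_{i=1}^N1\{\widehat k_i^{(K^0)}(\boldsymbol\theta)\neq k_i^0\}=o_p(T^{-\delta})$$ as $N,T\to\infty$.
   Context: Model: $y_{it}=x_{it}'\theta^0_{k_i^0}+\varepsilon_{it}$, $i\le N$, $t\le T$, random $x_{it}\in\mathbb{R}^p$, random $\varepsilon_{it}$, nonrandom $k_i^0\in[K^0]$, $\theta^0_k\in\Theta$, $G_k^0=\{i:k_i^0=k\}$, $N_k^0=|G_k^0|$. For $\boldsymbol\theta=(\theta_1,\dots,\theta_{K^0})$, $\widehat k_i^{(K^0)}(\boldsymbol\theta)=\arg\min_{k\in[K^0]}\sum_t(y_{it}-x_{it}'\theta_k)^2$. For $\eta>0$, $\mathcal N_\eta=\{\boldsymbol\theta\in\Theta^{K^0}:\|\theta_k-\theta_k^0\|^2<\eta\ \forall k\in[K^0]\}$. Assumption 1: $K^0$ fixed; $N_k^0=\tau_kN^{\alpha_k}$, $\tau_k$ bounded away from $0,\infty$, $\alpha_k\in[0,1]$, $N_k^0\ge1$, $\sum_kN_k^0=N$, $1=\alpha_1=\dots=\alpha_m>\alpha_{m+1}\ge\dots\ge\alpha_{K^0}\ge0$ for some $m\in[K^0-1]$. Assumption 2: constants $M,c>0$ with (a) $\Theta$ compact; (b) $E\|x_{it}\|^4\le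 M$; (c) $E\varepsilon_{it}=0$, $E\varepsilon_{it}^4\le M$; (d) $(NT)^{-1/2}\sum_{i,t}x_{it}\varepsilon_{it}=O_p(1)$; (e) with $\rho_{NT}(\boldsymbol\gamma_N,k,\tilde k)$ the minimum eigenvalue of $(N_k^0)^{-1}\sum_i1\{k_i^0=k\}1\{k_i=\tilde k\}T^{-1}\sum_tx_{it}x_{it}'$, some $\widehat\rho_{NT}\xrightarrow{p}\rho>0$ satisfies $\min_{\boldsymbol\gamma_N\in[K^0]^N}\max_{\tilde k}\rho_{NT}(\boldsymbol\gamma_N,k,\tilde k)\ge\widehat\rho_{NT}$ for all $k$, large $T$; (f) $\lambda_{\min}(T^{-1}\sum_tx_{it}x_{it}')\ge\widehat c_T$ for all $i$, large $T$, $\lim\widehat c_T>c$; (g) if $\alpha_{K^0}\ge1/2$, $N/T^\nu\to0$ for some $\nu>0$; if $\alpha_{K^0}<1/2$, $N^{1-2\alpha_{K^0}}/T\to0$; (h) $\|\theta^0_k-\theta^0_{\tilde k}\|>c$ for $k\ne\tilde k$; (i) $\sup_iP(T^{-1}\sum_t\|x_{it}\|^2\ge M)=o(T^{-\delta})$ for all $\delta>0$; (j) for each $\epsilon>0$, $\sup_iP(\|T^{-1}\sum_tx_{it}\varepsilon_{it}\|\ge\epsilon)=o(T^{-\delta})$ for all $\delta>0$; (k) $(NT)^{-1}\sum_{i,t}\varepsilon^2_{it}\xrightarrow{p}\sigma^2>0$. *)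

theory Defs
  imports "HOL-Probability.Probability"
begin

definition min_eig :: "real^'p^'p \<Rightarrow> real" where
  "min_eig A = Min {l. \<exists>v::real^'p. v \<noteq> 0 \<and> A *v v = l *\<^sub>R v}"

definition outer :: "real^'p \<Rightarrow> real^'p^'p" where
  "outer v = (\<chi> i j. v $ i * v $ j)"

definition outer_prob :: "'w measure \<Rightarrow> 'w set \<Rightarrow> real" where
  "outer_prob M A = Inf (measure M ` {B \<in> sets M. A \<subseteq> B})"

definition little_o_seq :: "(nat \<Rightarrow> real) \<Rightarrow> (nat \<Rightarrow> real) \<Rightarrow> bool" where
  "little_o_seq f r \<longleftrightarrow> (\<lambda>n. f n / r n) \<longlonglongrightarrow> 0"

definition little_op :: "'w measure \<Rightarrow> (nat \<Rightarrow> 'w \<Rightarrow> real) \<Rightarrow> (nat \<Rightarrow> real) \<Rightarrow> bool" where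
  "little_op M Z r \<longleftrightarrow> (\<forall>e>0. (\<lambda>n. outer_prob M {\<omega>\<in>space M. \<bar>Z n \<omega>\<bar> > e * r n}) \<longlonglongrightarrow> 0)"

definition bounded_in_prob :: "'w measure \<Rightarrow> (nat \<Rightarrow> 'w \<Rightarrow> 'b::real_normed_vector) \<Rightarrow> bool" where
  "bounded_in_prob M Z \<longleftrightarrow> (\<forall>e>0. \<exists>B. eventually (\<lambda>n. measure M {\<omega>\<in>space M. norm (Z n \<omega>) > B} < e) sequentially)"

definition conv_in_prob :: "'w measure \<Rightarrow> (nat \<Rightarrow> 'w \<Rightarrow> real) \<Rightarrow> real \<Rightarrow> bool" where
  "conv_in_prob M Z c \<longleftrightarrow> (\<forall>e>0. (\<lambda>n. measure M {\<omega>\<in>space M. \<bar>Z n \<omega> - c\<bar> > e}) \<longlonglongrightarrow> 0)"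

definition ymod :: "(nat \<Rightarrow> nat \<Rightarrow> nat \<Rightarrow> 'w \<Rightarrow> real^'p) \<Rightarrow> (nat \<Rightarrow> nat \<Rightarrow> nat \<Rightarrow> 'w \<Rightarrow> real)
    \<Rightarrow> (nat \<Rightarrow> real^'p) \<Rightarrow> (nat \<Rightarrow> nat \<Rightarrow> nat) \<Rightarrow> nat \<Rightarrow> nat \<Rightarrow> nat \<Rightarrow> 'w \<Rightarrow> real" where
  "ymod x eps theta0 k0 n i t \<omega> = x n i t \<omega> \<bullet> theta0 (k0 n i) + eps n i t \<omega>"

definition Qcrit :: "(nat \<Rightarrow> nat \<Rightarrow> nat \<Rightarrow> 'w \<Rightarrow> real^'p) \<Rightarrow> (nat \<Rightarrow> nat \<Rightarrow> nat \<Rightarrow> 'w \<Rightarrow> real)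
    \<Rightarrow> (nat \<Rightarrow> real^'p) \<Rightarrow> (nat \<Rightarrow> nat \<Rightarrow> nat) \<Rightarrow> (nat \<Rightarrow> nat)
    \<Rightarrow> nat \<Rightarrow> (nat \<Rightarrow> real^'p) \<Rightarrow> nat \<Rightarrow> nat \<Rightarrow> 'w \<Rightarrow> real" where
  "Qcrit x eps theta0 k0 T n theta i k \<omega> =
     (\<Sum>t=1..T n. (ymod x eps theta0 k0 n i t \<omega> - x n i t \<omega> \<bullet> theta k)\<^sup>2)"

definition rhoNT :: "(nat \<Rightarrow> nat \<Rightarrow> nat \<Rightarrow> 'w \<Rightarrow> real^'p) \<Rightarrow> (nat \<Rightarrow> nat \<Rightarrow> nat) \<Rightarrow> (nat \<Rightarrow> nat)
    \<Rightarrow> (nat \<Rightarrow> nat) \<Rightarrow> nat \<Rightarrow> (nat \<Rightarrow> nat) \<Rightarrow> nat \<Rightarrow> nat \<Rightarrow> 'w \<Rightarrow> real" where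
  "rhoNT x k0 N T n \<gamma> k kt \<omega> =
     min_eig ((1 / real (card {i\<in>{1..N n}. k0 n i = k})) *\<^sub>R
       (\<Sum>i\<in>{1..N n}. (if k0 n i = k \<and> \<gamma> i = kt then 1 else 0) *\<^sub>R
          ((1 / real (T n)) *\<^sub>R (\<Sum>t=1..T n. outer (x n i t \<omega>)))))"

end

theory Submission
  imports Defs
begin


lemma outer_mult: "u \<bullet> (outer v *v w) = (v \<bullet> u) * (v \<bullet> w)"
  apply (simp add: outer_def matrix_vector_mult_def inner_vec_def sum_distrib_left sum_distrib_right)
  apply (subst sum.swap)
  apply (simp add: ac_simps)
  done

lemma sum_mv: "(\<Sum>t\<in>S. (A t :: real^'p^'p)) *v w = (\<Sum>t\<in>S. A t *v w)"
  by (induction S rule: infinite_finite_induct) (auto simp: matrix_vector_mult_add_rdistrib)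

lemma quad_avg:
  fixes x :: "nat \<Rightarrow> real^'p"
  shows "u \<bullet> (((1 / real T) *\<^sub>R (\<Sum>t=1..T. outer (x t))) *v w) = (1 / real T) * (\<Sum>t=1..T. (x t \<bullet> u) * (x t \<bullet> w))"
  by (simp add: scaleR_matrix_vector_assoc[symmetric] sum_mv inner_sum_right outer_mult)

lemma eig_finite:
  fixes A :: "real^'p^'p"
  assumes sym: "\<And>u w. u \<bullet> (A *v w) = w \<bullet> (A *v u)"
  shows "finite {l. \<exists>v::real^'p. v \<noteq> 0 \<and> A *v v = l *\<^sub>R v}"
proof -
  define S where "S = {l. \<exists>v::real^'p. v \<noteq> 0 \<and> A *v v = l *\<^sub>R v}"
  define ev where "ev l = (SOME v::real^'p. v \<noteq> 0 \<and> A *v v = l *\<^sub>R v)" for l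
  have ev: "ev l \<noteq> 0 \<and> A *v ev l = l *\<^sub>R ev l" if "l \<in> S" for l
    using that unfolding S_def ev_def by (metis (mono_tags, lifting) mem_Collect_eq someI_ex)
  have inj: "inj_on ev S"
  proof (rule inj_onI)
    fix l l' assume "l \<in> S" "l' \<in> S" "ev l = ev l'"
    then have "l *\<^sub>R ev l = l' *\<^sub>R ev l" "ev l \<noteq> 0" using ev by metis+
    then show "l = l'" by (metis scaleR_cancel_right)
  qed
  have orth: "pairwise orthogonal (ev ` S)"
  proof (clarsimp simp: pairwise_def)
    fix l l' assume l: "l \<in> S" and l': "l' \<in> S" and ne: "ev l \<noteq> ev l'"
    then have "l \<noteq> l'" by auto
    have "l * (ev l' \<bullet> ev l) = ev l' \<bullet> (A *v ev l)" using ev[OF l] by simp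
    also have "\<dots> = ev l \<bullet> (A *v ev l')" by (rule sym)
    also have "\<dots> = l' * (ev l \<bullet> ev l')" using ev[OF l'] by simp
    finally have "(l - l') * (ev l \<bullet> ev l') = 0" by (simp add: inner_commute algebra_simps)
    with \<open>l \<noteq> l'\<close> show "orthogonal (ev l) (ev l')" by (simp add: orthogonal_def)
  qed
  have "0 \<notin> ev ` S" using ev by force
  then have "independent (ev ` S)" using orth pairwise_orthogonal_independent by blast
  then have "finite (ev ` S)" using independent_imp_finite by blast
  then have "finite S" using inj finite_imageD by blast
  then show ?thesis unfolding S_def .
qed

lemma eig_bound:
  fixes A :: "real^'p^'p"
  assumes sym: "\<And>u w. u \<bullet> (A *v w) = w \<bullet> (A *v u)"
  shows "min_eig A * (norm v)\<^sup>2 \<le> v \<bullet> (A *v v)"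
proof -
  define q where "q v = v \<bullet> (A *v v)" for v :: "real^'p"
  have cont: "continuous_on (sphere 0 1) q"
    unfolding q_def by (intro continuous_intros linear_continuous_on matrix_vector_mul_linear linear_linear[THEN iffD1]) 
  obtain v0 where v0: "v0 \<in> sphere (0::real^'p) 1" and min: "\<And>y. y \<in> sphere 0 1 \<Longrightarrow> q v0 \<le> q y"
  proof -
    have "sphere (0::real^'p) 1 \<noteq> {}" by simp
    then have "\<exists>x\<in>sphere 0 1. \<forall>y\<in>sphere 0 1. q x \<le> q y"
      using continuous_attains_inf[OF compact_sphere _ cont] by blast
    then show ?thesis using that by blast
  qed
  define \<mu> where "\<mu> = q v0"
  have qscale: "q (c *\<^sub>R w) = c\<^sup>2 * q w" for c w
    by (simp add: q_def matrix_vector_mult_scaleR power2_eq_square)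
  have qge: "q w \<ge> \<mu> * (norm w)\<^sup>2" for w
  proof (cases "w = 0")
    case True then show ?thesis by (simp add: q_def)
  next
    case False
    define u where "u = (1 / norm w) *\<^sub>R w"
    have u: "u \<in> sphere 0 1" using False by (simp add: u_def)
    have w: "w = norm w *\<^sub>R u" using False by (simp add: u_def)
    have "q w = (norm w)\<^sup>2 * q u" by (subst w, rule qscale)
    moreover have "\<mu> \<le> q u" using min[OF u] by (simp add: \<mu>_def)
    ultimately show ?thesis by (metis mult.commute mult_right_mono zero_le_power2)
  qed
  define u where "u = A *v v0 - \<mu> *\<^sub>R v0"
  have nv0: "norm v0 = 1" using v0 by simp
  have u0: "u = 0"
  proof (rule ccontr)
    assume "u \<noteq> 0"
    then have nu: "(norm u)\<^sup>2 > 0" by simp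
    define K where "K = q u - \<mu> * (norm u)\<^sup>2"
    have key: "0 \<le> - 2 * t * (norm u)\<^sup>2 + t\<^sup>2 * K" for t
    proof -
      have h1: "q (v0 - t *\<^sub>R u) - \<mu> * (norm (v0 - t *\<^sub>R u))\<^sup>2 \<ge> 0" using qge[of "v0 - t *\<^sub>R u"] by simp
      have h2: "q (v0 - t *\<^sub>R u) = q v0 - t * (v0 \<bullet> (A *v u)) - t * (u \<bullet> (A *v v0)) + t\<^sup>2 * q u"
        by (simp add: q_def algebra_simps inner_diff_left inner_diff_right power2_eq_square)
      have h3: "v0 \<bullet> (A *v u) = u \<bullet> (A *v v0)" by (rule sym)
      have h4: "(norm (v0 - t *\<^sub>R u))\<^sup>2 = 1 - 2 * t * (u \<bullet> v0) + t\<^sup>2 * (norm u)\<^sup>2"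
      proof -
        have vv: "v0 \<bullet> v0 = 1" using nv0 by (metis inner_real_def norm_eq_sqrt_inner real_sqrt_eq_1_iff mult_1)
        show ?thesis unfolding power2_norm_eq_inner
          by (simp add: vv algebra_simps inner_diff_left inner_diff_right inner_commute power2_eq_square)
      qed
      have h5: "u \<bullet> (A *v v0) = (norm u)\<^sup>2 + \<mu> * (u \<bullet> v0)"
        by (simp add: u_def power2_norm_eq_inner inner_diff_right)
      have h6: "\<mu> * (norm (v0 - t *\<^sub>R u))\<^sup>2 = \<mu> - 2 * t * \<mu> * (u \<bullet> v0) + t\<^sup>2 * \<mu> * (norm u)\<^sup>2"
        unfolding h4 by (simp add: algebra_simps)
      have h7: "t * (u \<bullet> (A *v v0)) = t * (norm u)\<^sup>2 + t * \<mu> * (u \<bullet> v0)"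
        unfolding h5 by (simp add: algebra_simps)
      have h8: "t\<^sup>2 * K = t\<^sup>2 * q u - t\<^sup>2 * \<mu> * (norm u)\<^sup>2" by (simp add: K_def algebra_simps)
      have eq: "q (v0 - t *\<^sub>R u) - \<mu> * (norm (v0 - t *\<^sub>R u))\<^sup>2 = - 2 * t * (norm u)\<^sup>2 + t\<^sup>2 * K"
        unfolding h2 h3 h6 h5 K_def by (simp add: algebra_simps \<mu>_def)
      show ?thesis using h1 eq by linarith
    qed
    define t where "t = (norm u)\<^sup>2 / (\<bar>K\<bar> + 1)"
    have tpos: "t > 0" using nu by (simp add: t_def)
    have "t * K \<le> (norm u)\<^sup>2"
    proof -
      have "t * K \<le> t * \<bar>K\<bar>" using tpos by (simp add: mult_left_mono)
      also have "\<dots> \<le> t * (\<bar>K\<bar> + 1)" using tpos by simp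
      also have "\<dots> = (norm u)\<^sup>2" by (simp add: t_def)
      finally show ?thesis .
    qed
    moreover have "0 \<le> t * (- 2 * (norm u)\<^sup>2 + t * K)" using key[of t] by (simp add: algebra_simps power2_eq_square)
    then have "0 \<le> - 2 * (norm u)\<^sup>2 + t * K" using tpos by (simp add: zero_le_mult_iff)
    ultimately show False using nu by linarith
  qed
  have "\<mu> \<in> {l. \<exists>v::real^'p. v \<noteq> 0 \<and> A *v v = l *\<^sub>R v}"
    using u0 nv0 by (auto simp: u_def intro!: exI[of _ v0])
  then have "min_eig A \<le> \<mu>" unfolding min_eig_def using eig_finite[OF sym] by (simp add: Min_le)
  then have "min_eig A * (norm v)\<^sup>2 \<le> \<mu> * (norm v)\<^sup>2" by (simp add: mult_right_mono)
  also have "\<dots> \<le> q v" by (rule qge)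
  finally show ?thesis by (simp add: q_def)
qed



lemma sym_avg:
  fixes x :: "nat \<Rightarrow> real^'p"
  shows "u \<bullet> (((1 / real T) *\<^sub>R (\<Sum>t=1..T. outer (x t))) *v w) = w \<bullet> (((1 / real T) *\<^sub>R (\<Sum>t=1..T. outer (x t))) *v u)"
  unfolding quad_avg by (simp add: mult.commute)

lemma misclass:
  fixes x :: "nat \<Rightarrow> real^'p" and e :: "nat \<Rightarrow> real" and T :: nat and th0 thk0 thk :: "real^'p"
  assumes T: "T > 0"
    and eig: "c \<le> min_eig ((1 / real T) *\<^sub>R (\<Sum>t=1..T. outer (x t)))"
    and c: "c > 0" and Mb: "Mb > 0"
    and S: "(1 / real T) * (\<Sum>t=1..T. (norm (x t))\<^sup>2) < Mb"
    and G: "norm ((1 / real T) *\<^sub>R (\<Sum>t=1..T. e t *\<^sub>R x t)) < e0"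
    and Q: "(\<Sum>t=1..T. (x t \<bullet> th0 + e t - x t \<bullet> thk)\<^sup>2) \<le> (\<Sum>t=1..T. (x t \<bullet> th0 + e t - x t \<bullet> thk0)\<^sup>2)"
    and a: "norm (th0 - thk) \<ge> c / 2"
    and d: "(norm (thk0 - th0))\<^sup>2 < \<eta>"
    and eta: "\<eta> * Mb \<le> c ^ 3 / 8"
    and cross: "2 * norm (thk0 - thk) * e0 < c ^ 3 / 8"
  shows False
proof -
  define a where "a = th0 - thk"
  define d where "d = thk0 - th0"
  define A where "A = (1 / real T) *\<^sub>R (\<Sum>t=1..T. outer (x t))"
  define g where "g = (1 / real T) *\<^sub>R (\<Sum>t=1..T. e t *\<^sub>R x t)"
  have ad: "a + d = thk0 - thk" by (simp add: a_def d_def)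
  have e1: "(x t \<bullet> th0 + e t - x t \<bullet> thk) = e t + x t \<bullet> a" for t by (simp add: a_def inner_diff_right)
  have e2: "(x t \<bullet> th0 + e t - x t \<bullet> thk0) = e t - x t \<bullet> d" for t by (simp add: d_def inner_diff_right)
  have "(\<Sum>t=1..T. (e t + x t \<bullet> a)\<^sup>2) - (\<Sum>t=1..T. (e t - x t \<bullet> d)\<^sup>2)
      = (\<Sum>t=1..T. (x t \<bullet> a)\<^sup>2) - (\<Sum>t=1..T. (x t \<bullet> d)\<^sup>2) + 2 * (\<Sum>t=1..T. e t * (x t \<bullet> (a + d)))"
    by (simp add: sum_subtractf[symmetric] sum.distrib[symmetric] sum_distrib_left power2_eq_square
        inner_add_right algebra_simps)
  with Q have Q2: "(\<Sum>t=1..T. (x t \<bullet> a)\<^sup>2) \<le> (\<Sum>t=1..T. (x t \<bullet> d)\<^sup>2) - 2 * (\<Sum>t=1..T. e t * (x t \<bullet> (a + d)))"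
    unfolding e1 e2 by linarith
  have Tp: "1 / real T > 0" using T by simp
  define qa where "qa = (1 / real T) * (\<Sum>t=1..T. (x t \<bullet> a)\<^sup>2)"
  define qd where "qd = (1 / real T) * (\<Sum>t=1..T. (x t \<bullet> d)\<^sup>2)"
  define cr where "cr = (1 / real T) * (\<Sum>t=1..T. e t * (x t \<bullet> (a + d)))"
  have Q3: "qa \<le> qd - 2 * cr"
    using mult_left_mono[OF Q2 less_imp_le[OF Tp]] unfolding qa_def qd_def cr_def by (simp add: algebra_simps)
  have qa_eq: "qa = a \<bullet> (A *v a)" unfolding A_def quad_avg qa_def by (simp add: power2_eq_square)
  have "min_eig A * (norm a)\<^sup>2 \<le> a \<bullet> (A *v a)" by (rule eig_bound) (unfold A_def, rule sym_avg)
  moreover have "c * (norm a)\<^sup>2 \<le> min_eig A * (norm a)\<^sup>2" using eig unfolding A_def by (simp add: mult_right_mono)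
  moreover have "c * (c / 2)\<^sup>2 \<le> c * (norm a)\<^sup>2"
    using a c unfolding a_def by (intro mult_left_mono power_mono) auto
  ultimately have qa_lb: "c ^ 3 / 4 \<le> qa" unfolding qa_eq by (simp add: power2_eq_square power3_eq_cube)
  have "qd \<le> (1 / real T) * (\<Sum>t=1..T. (norm (x t))\<^sup>2 * (norm d)\<^sup>2)"
    unfolding qd_def
  proof (intro mult_left_mono sum_mono)
    fix t
    have "\<bar>x t \<bullet> d\<bar> \<le> norm (x t) * norm d" by (rule Cauchy_Schwarz_ineq2)
    then have "\<bar>x t \<bullet> d\<bar>\<^sup>2 \<le> (norm (x t) * norm d)\<^sup>2" by (intro power_mono) auto
    then show "(x t \<bullet> d)\<^sup>2 \<le> (norm (x t))\<^sup>2 * (norm d)\<^sup>2" by (simp add: power_mult_distrib)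
  qed (use Tp in auto)
  also have "\<dots> = (norm d)\<^sup>2 * ((1 / real T) * (\<Sum>t=1..T. (norm (x t))\<^sup>2))"
    by (simp add: sum_distrib_left sum_distrib_right algebra_simps)
  also have "\<dots> \<le> \<eta> * Mb"
  proof -
    have "0 \<le> \<eta>" using d by (smt (verit) zero_le_power2)
    moreover have "0 \<le> (1 / real T) * (\<Sum>t=1..T. (norm (x t))\<^sup>2)" by (intro mult_nonneg_nonneg sum_nonneg) auto
    ultimately show ?thesis using d S unfolding d_def by (intro mult_mono) auto
  qed
  finally have qd_ub: "qd \<le> c ^ 3 / 8" using eta by linarith
  have cr_eq: "cr = g \<bullet> (a + d)"
    unfolding cr_def g_def by (simp add: inner_sum_left sum_distrib_left)
  have "\<bar>cr\<bar> \<le> norm g * norm (a + d)" unfolding cr_eq by (rule Cauchy_Schwarz_ineq2)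
  also have "\<dots> \<le> e0 * norm (a + d)" using G unfolding g_def by (intro mult_right_mono) auto
  finally have "2 * \<bar>cr\<bar> < c ^ 3 / 8" using cross unfolding ad by (simp add: mult.commute mult.left_commute)
  then show False using Q3 qa_lb qd_ub by linarith
qed



lemma outer_prob_le: "B \<in> sets M \<Longrightarrow> A \<subseteq> B \<Longrightarrow> outer_prob M A \<le> measure M B"
  unfolding outer_prob_def by (rule cInf_lower) (auto intro: bdd_belowI[where m=0])

lemma outer_prob_nonneg: "A \<subseteq> space M \<Longrightarrow> 0 \<le> outer_prob M A"
  unfolding outer_prob_def by (rule cInf_greatest) auto

theorem lemmaA3:
  fixes M :: "'w measure"
    and N T :: "nat \<Rightarrow> nat"
    and K0 :: nat
    and x :: "nat \<Rightarrow> nat \<Rightarrow> nat \<Rightarrow> 'w \<Rightarrow> real^'p"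
    and eps :: "nat \<Rightarrow> nat \<Rightarrow> nat \<Rightarrow> 'w \<Rightarrow> real"
    and k0 :: "nat \<Rightarrow> nat \<Rightarrow> nat"
    and theta0 :: "nat \<Rightarrow> real^'p"
    and Theta :: "(real^'p) set"
    and tau :: "nat \<Rightarrow> nat \<Rightarrow> real"
    and alpha :: "nat \<Rightarrow> real"
    and khat :: "nat \<Rightarrow> (nat \<Rightarrow> real^'p) \<Rightarrow> nat \<Rightarrow> 'w \<Rightarrow> nat"
  assumes P: "prob_space M"
    and NT_lim: "filterlim N at_top sequentially" "filterlim T at_top sequentially"
    \<comment> \<open>measurability of the data\<close>
    and x_meas: "\<And>n i t. x n i t \<in> borel_measurable M"
    and eps_meas: "\<And>n i t. eps n i t \<in> borel_measurable M"
    \<comment> \<open>khat is an argmin selection (any tie-breaking)\<close>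
    and khat_argmin: "\<And>n theta i \<omega>. khat n theta i \<omega> \<in> {1..K0} \<and>
         (\<forall>k\<in>{1..K0}. Qcrit x eps theta0 k0 T n theta i (khat n theta i \<omega>) \<omega>
                       \<le> Qcrit x eps theta0 k0 T n theta i k \<omega>)"
    \<comment> \<open>Assumption 1\<close>
    and k0_range: "\<And>n i. i \<in> {1..N n} \<Longrightarrow> k0 n i \<in> {1..K0}"
    and A1_size: "\<And>n k. k \<in> {1..K0} \<Longrightarrow>
         real (card {i\<in>{1..N n}. k0 n i = k}) = tau n k * real (N n) powr alpha k"
    and A1_tau: "\<exists>a b. 0 < a \<and> (\<forall>n. \<forall>k\<in>{1..K0}. a \<le> tau n k \<and> tau n k \<le> b)"
    and A1_alpha: "\<And>k. k \<in> {1..K0} \<Longrightarrow> 0 \<le> alpha k \<and> alpha k \<le> 1"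
    and A1_nonempty: "\<And>n k. k \<in> {1..K0} \<Longrightarrow> card {i\<in>{1..N n}. k0 n i = k} \<ge> 1"
    and A1_order: "\<exists>m\<in>{1..K0-1}. (\<forall>k\<in>{1..m}. alpha k = 1) \<and> alpha (m+1) < 1 \<and>
                      (\<forall>k\<in>{m+1..K0}. \<forall>k'\<in>{m+1..K0}. k \<le> k' \<longrightarrow> alpha k' \<le> alpha k)"
    \<comment> \<open>Assumption 2\<close>
    and A2: "\<exists>Mb c. Mb > 0 \<and> c > 0 \<and>
       \<comment> \<open>(a)\<close>
       compact Theta \<and> (\<forall>k\<in>{1..K0}. theta0 k \<in> Theta) \<and>
       \<comment> \<open>(b)\<close>
       (\<forall>n. \<forall>i\<in>{1..N n}. \<forall>t\<in>{1..T n}.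
          integrable M (\<lambda>\<omega>. norm (x n i t \<omega>) ^ 4) \<and>
          integral\<^sup>L M (\<lambda>\<omega>. norm (x n i t \<omega>) ^ 4) \<le> Mb) \<and>
       \<comment> \<open>(c)\<close>
       (\<forall>n. \<forall>i\<in>{1..N n}. \<forall>t\<in>{1..T n}.
          integrable M (eps n i t) \<and> integral\<^sup>L M (eps n i t) = 0 \<and>
          integrable M (\<lambda>\<omega>. eps n i t \<omega> ^ 4) \<and>
          integral\<^sup>L M (\<lambda>\<omega>. eps n i t \<omega> ^ 4) \<le> Mb) \<and>
       \<comment> \<open>(d)\<close>
       bounded_in_prob M (\<lambda>n \<omega>. (1 / sqrt (real (N n) * real (T n))) *\<^sub>R
          (\<Sum>i=1..N n. \<Sum>t=1..T n. eps n i t \<omega> *\<^sub>R x n i t \<omega>)) \<and>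
       \<comment> \<open>(e)\<close>
       (\<exists>rhohat rho. rho > 0 \<and> (\<forall>n. rhohat n \<in> borel_measurable M) \<and>
          conv_in_prob M rhohat rho \<and>
          eventually (\<lambda>n. \<forall>\<omega>\<in>space M. \<forall>k\<in>{1..K0}. \<forall>\<gamma>. (\<forall>i\<in>{1..N n}. \<gamma> i \<in> {1..K0}) \<longrightarrow>
             Max ((\<lambda>kt. rhoNT x k0 N T n \<gamma> k kt \<omega>) ` {1..K0}) \<ge> rhohat n \<omega>) sequentially) \<and>
       \<comment> \<open>(f)\<close>
       (\<exists>chat L. chat \<longlonglongrightarrow> L \<and> L > c \<and>
          eventually (\<lambda>n. \<forall>\<omega>\<in>space M. \<forall>i\<in>{1..N n}.
             min_eig ((1 / real (T n)) *\<^sub>R (\<Sum>t=1..T n. outer (x n i t \<omega>))) \<ge> chat n) sequentially) \<and>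
       \<comment> \<open>(g)\<close>
       (alpha K0 \<ge> 1/2 \<longrightarrow> (\<exists>\<nu>>0. (\<lambda>n. real (N n) / real (T n) powr \<nu>) \<longlonglongrightarrow> 0)) \<and>
       (alpha K0 < 1/2 \<longrightarrow> (\<lambda>n. real (N n) powr (1 - 2 * alpha K0) / real (T n)) \<longlonglongrightarrow> 0) \<and>
       \<comment> \<open>(h)\<close>
       (\<forall>k\<in>{1..K0}. \<forall>k'\<in>{1..K0}. k \<noteq> k' \<longrightarrow> norm (theta0 k - theta0 k') > c) \<and>
       \<comment> \<open>(i)\<close>
       (\<forall>\<delta>>0. little_o_seq
          (\<lambda>n. SUP i\<in>{1..N n}. measure M {\<omega>\<in>space M.
                 (1 / real (T n)) * (\<Sum>t=1..T n. (norm (x n i t \<omega>))\<^sup>2) \<ge> Mb})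
          (\<lambda>n. real (T n) powr (- \<delta>))) \<and>
       \<comment> \<open>(j)\<close>
       (\<forall>e>0. \<forall>\<delta>>0. little_o_seq
          (\<lambda>n. SUP i\<in>{1..N n}. measure M {\<omega>\<in>space M.
                 norm ((1 / real (T n)) *\<^sub>R (\<Sum>t=1..T n. eps n i t \<omega> *\<^sub>R x n i t \<omega>)) \<ge> e})
          (\<lambda>n. real (T n) powr (- \<delta>))) \<and>
       \<comment> \<open>(k)\<close>
       (\<exists>\<sigma>2>0. conv_in_prob M
          (\<lambda>n \<omega>. (1 / (real (N n) * real (T n))) * (\<Sum>i=1..N n. \<Sum>t=1..T n. (eps n i t \<omega>)\<^sup>2)) \<sigma>2)"
  shows "\<exists>\<eta>0>0. \<forall>\<eta>. 0 < \<eta> \<and> \<eta> < \<eta>0 \<longrightarrow> (\<forall>\<delta>>0.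
           little_op M
             (\<lambda>n \<omega>. SUP theta\<in>{theta. (\<forall>k\<in>{1..K0}. theta k \<in> Theta \<and> (norm (theta k - theta0 k))\<^sup>2 < \<eta>)}.
                (1 / real (N n)) * (\<Sum>i=1..N n. if khat n theta i \<omega> \<noteq> k0 n i then 1 else 0))
             (\<lambda>n. real (T n) powr (- \<delta>)))"
proof -
  interpret prob_space M by (rule P)
  from A2 obtain Mb c chat L where Mb: "Mb > 0" and c: "c > 0" and cT: "compact Theta"
    and th0T: "\<forall>k\<in>{1..K0}. theta0 k \<in> Theta"
    and chat: "chat \<longlonglongrightarrow> L" "L > c"
    and evf: "eventually (\<lambda>n. \<forall>\<omega>\<in>space M. \<forall>i\<in>{1..N n}.
             min_eig ((1 / real (T n)) *\<^sub>R (\<Sum>t=1..T n. outer (x n i t \<omega>))) \<ge> chat n) sequentially"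
    and hpart: "\<forall>k\<in>{1..K0}. \<forall>k'\<in>{1..K0}. k \<noteq> k' \<longrightarrow> norm (theta0 k - theta0 k') > c"
    and ipart: "\<forall>\<delta>>0. little_o_seq
          (\<lambda>n. SUP i\<in>{1..N n}. measure M {\<omega>\<in>space M.
                 (1 / real (T n)) * (\<Sum>t=1..T n. (norm (x n i t \<omega>))\<^sup>2) \<ge> Mb})
          (\<lambda>n. real (T n) powr (- \<delta>))"
    and jpart: "\<forall>e>0. \<forall>\<delta>>0. little_o_seq
          (\<lambda>n. SUP i\<in>{1..N n}. measure M {\<omega>\<in>space M.
                 norm ((1 / real (T n)) *\<^sub>R (\<Sum>t=1..T n. eps n i t \<omega> *\<^sub>R x n i t \<omega>)) \<ge> e})
          (\<lambda>n. real (T n) powr (- \<delta>))"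
    apply (elim exE conjE)
    subgoal for Mb c rhohat rho chat L \<sigma>2
      by (rule that[of Mb c chat L]; assumption)
    done
  obtain R where R: "R > 0" "\<And>v. v \<in> Theta \<Longrightarrow> norm v \<le> R"
    using compact_imp_bounded[OF cT] by (auto simp: bounded_pos)
  have evc: "eventually (\<lambda>n. chat n > c) sequentially" using order_tendstoD(1)[OF chat] .
  have evT: "eventually (\<lambda>n. T n \<ge> 1) sequentially" using NT_lim(2) by (simp add: filterlim_at_top)
  have evN: "eventually (\<lambda>n. N n \<ge> 1) sequentially" using NT_lim(1) by (simp add: filterlim_at_top)
  define \<eta>0 where "\<eta>0 = min (c\<^sup>2 / 4) (c ^ 3 / (8 * Mb))"
  define e0 where "e0 = c ^ 3 / (64 * R)"
  have e0p: "e0 > 0" using c R by (simp add: e0_def)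
  define B1 where "B1 n i = {\<omega>\<in>space M. (1 / real (T n)) * (\<Sum>t=1..T n. (norm (x n i t \<omega>))\<^sup>2) \<ge> Mb}" for n i
  define B2 where "B2 n i = {\<omega>\<in>space M. norm ((1 / real (T n)) *\<^sub>R (\<Sum>t=1..T n. eps n i t \<omega> *\<^sub>R x n i t \<omega>)) \<ge> e0}" for n i
  define B where "B n i = B1 n i \<union> B2 n i" for n i
  have B1s[measurable]: "B1 n i \<in> sets M" for n i unfolding B1_def using x_meas by measurable
  have B2s[measurable]: "B2 n i \<in> sets M" for n i unfolding B2_def using x_meas eps_meas by measurable
  have Bs[measurable]: "B n i \<in> sets M" for n i unfolding B_def by measurable
  define W where "W n \<omega> = ((1 / real (N n)) * (\<Sum>i=1..N n. indicator (B n i) \<omega>) :: real)" for n \<omega>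
  have Wm[measurable]: "W n \<in> borel_measurable M" for n unfolding W_def by measurable
  have Wi: "integrable M (W n)" for n unfolding W_def
    by (intro integrable_mult_right integrable_sum integrable_real_indicator) (auto simp: less_top[symmetric])
  have W0: "W n \<omega> \<ge> 0" for n \<omega> unfolding W_def by (intro mult_nonneg_nonneg sum_nonneg) auto
  show ?thesis
  proof (intro exI[of _ \<eta>0] conjI allI impI)
    show "\<eta>0 > 0" using c Mb by (simp add: \<eta>0_def)
    fix \<eta> \<delta> :: real
    assume \<eta>: "0 < \<eta> \<and> \<eta> < \<eta>0" and \<delta>: "\<delta> > 0"
    define ThS where "ThS = {theta. (\<forall>k\<in>{1..K0}. theta k \<in> Theta \<and> (norm (theta k - theta0 k))\<^sup>2 < \<eta>)}"
    define f where "f n \<omega> theta = (1 / real (N n)) * (\<Sum>i=1..N n. if khat n theta i \<omega> \<noteq> k0 n i then 1 else 0)"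
      for n \<omega> theta
    define Z where "Z n \<omega> = (SUP theta\<in>ThS. f n \<omega> theta)" for n \<omega>
    have th0S: "theta0 \<in> ThS" using th0T \<eta> by (simp add: ThS_def)
    have det: "eventually (\<lambda>n. \<forall>\<omega>\<in>space M. \<forall>\<theta>\<in>ThS. \<forall>i\<in>{1..N n}. khat n \<theta> i \<omega> \<noteq> k0 n i \<longrightarrow> \<omega> \<in> B n i) sequentially"
      using evf evc evT
    proof eventually_elim
      case (elim n)
      show ?case
      proof (intro ballI impI)
        fix \<omega> \<theta> i assume \<omega>: "\<omega> \<in> space M" and \<theta>: "\<theta> \<in> ThS" and i: "i \<in> {1..N n}" and ne: "khat n \<theta> i \<omega> \<noteq> k0 n i"
        show "\<omega> \<in> B n i"
        proof (rule ccontr)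
          assume nB: "\<omega> \<notin> B n i"
          define kh where "kh = khat n \<theta> i \<omega>"
          define k where "k = k0 n i"
          have kr: "k \<in> {1..K0}" using k0_range[OF i] by (simp add: k_def)
          note ka = khat_argmin[of n \<theta> i \<omega>, folded kh_def]
          have khr: "kh \<in> {1..K0}" using ka by blast
          have Qle: "Qcrit x eps theta0 k0 T n \<theta> i kh \<omega> \<le> Qcrit x eps theta0 k0 T n \<theta> i k \<omega>"
            using ka kr by blast
          have nek: "kh \<noteq> k" using ne by (simp add: kh_def k_def)
          have Sx: "(1 / real (T n)) * (\<Sum>t=1..T n. (norm (x n i t \<omega>))\<^sup>2) < Mb"
            using nB \<omega> by (auto simp: B_def B1_def)
          have Gx: "norm ((1 / real (T n)) *\<^sub>R (\<Sum>t=1..T n. eps n i t \<omega> *\<^sub>R x n i t \<omega>)) < e0"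
            using nB \<omega> by (auto simp: B_def B2_def)
          have thk: "\<theta> kh \<in> Theta" "(norm (\<theta> kh - theta0 kh))\<^sup>2 < \<eta>" using \<theta> khr by (auto simp: ThS_def)
          have thk0: "\<theta> k \<in> Theta" "(norm (\<theta> k - theta0 k))\<^sup>2 < \<eta>" using \<theta> kr by (auto simp: ThS_def)
          have m1: "\<eta>0 \<le> c\<^sup>2 / 4" "\<eta>0 \<le> c ^ 3 / (8 * Mb)" unfolding \<eta>0_def by simp_all
          have eta4: "\<eta> < c\<^sup>2 / 4" using \<eta> m1 by linarith
          have c4: "(c / 2)\<^sup>2 = c\<^sup>2 / 4" by (simp add: power_divide)
          have "(norm (\<theta> kh - theta0 kh))\<^sup>2 < (c / 2)\<^sup>2"
            using thk(2) eta4 c4 by linarith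
          then have small: "norm (\<theta> kh - theta0 kh) < c / 2"
            by (rule power_less_imp_less_base) (use c in simp)
          have big: "norm (theta0 k - theta0 kh) > c" using hpart kr khr nek by auto
          have "norm (theta0 k - theta0 kh) \<le> norm (theta0 k - \<theta> kh) + norm (\<theta> kh - theta0 kh)"
            using norm_triangle_ineq[of "theta0 k - \<theta> kh" "\<theta> kh - theta0 kh"] by simp
          then have a: "norm (theta0 k - \<theta> kh) \<ge> c / 2" using small big by linarith
          have "norm (\<theta> k - \<theta> kh) \<le> norm (\<theta> k) + norm (\<theta> kh)" by (rule norm_triangle_ineq4)
          also have "\<dots> \<le> 2 * R" using R(2)[OF thk0(1)] R(2)[OF thk(1)] by linarith
          finally have "2 * norm (\<theta> k - \<theta> kh) * e0 \<le> 2 * (2 * R) * e0" using e0p by simp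
          also have "\<dots> = c ^ 3 / 16" using R by (simp add: e0_def)
          finally have cr16: "2 * norm (\<theta> k - \<theta> kh) * e0 \<le> c ^ 3 / 16" .
          have "c ^ 3 > 0" using c by simp
          then have cross: "2 * norm (\<theta> k - \<theta> kh) * e0 < c ^ 3 / 8" using cr16 by linarith
          have eta: "\<eta> * Mb \<le> c ^ 3 / 8"
          proof -
            have "\<eta> \<le> c ^ 3 / (8 * Mb)" using \<eta> m1 by linarith
            then show ?thesis using Mb by (simp add: field_simps)
          qed
          have eig: "c \<le> min_eig ((1 / real (T n)) *\<^sub>R (\<Sum>t=1..T n. outer (x n i t \<omega>)))"
          proof -
            have "chat n \<le> min_eig ((1 / real (T n)) *\<^sub>R (\<Sum>t=1..T n. outer (x n i t \<omega>)))"
              using elim(1) \<omega> i by blast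
            then show ?thesis using elim(2) by linarith
          qed
          have Q: "(\<Sum>t=1..T n. (x n i t \<omega> \<bullet> theta0 k + eps n i t \<omega> - x n i t \<omega> \<bullet> \<theta> kh)\<^sup>2)
               \<le> (\<Sum>t=1..T n. (x n i t \<omega> \<bullet> theta0 k + eps n i t \<omega> - x n i t \<omega> \<bullet> \<theta> k)\<^sup>2)"
            using Qle unfolding Qcrit_def ymod_def k_def .
          have Tn: "T n > 0" using elim(3) by simp
          show False
            by (rule misclass[OF Tn eig c Mb Sx Gx Q a thk0(2) eta cross])
        qed
      qed
    qed
    have fW: "f n \<omega> \<theta> \<le> W n \<omega>" if "\<forall>\<theta>\<in>ThS. \<forall>i\<in>{1..N n}. khat n \<theta> i \<omega> \<noteq> k0 n i \<longrightarrow> \<omega> \<in> B n i"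
      "\<theta> \<in> ThS" for n \<omega> \<theta>
      unfolding f_def W_def using that
      by (intro mult_left_mono sum_mono) (auto simp: indicator_def)
    have f0: "f n \<omega> \<theta> \<ge> 0" for n \<omega> \<theta> unfolding f_def by (intro mult_nonneg_nonneg sum_nonneg) auto
    have ZW: "eventually (\<lambda>n. \<forall>\<omega>\<in>space M. \<bar>Z n \<omega>\<bar> \<le> W n \<omega>) sequentially"
      using det
    proof eventually_elim
      case (elim n)
      show ?case
      proof
        fix \<omega> assume \<omega>: "\<omega> \<in> space M"
        have le: "\<And>\<theta>. \<theta> \<in> ThS \<Longrightarrow> f n \<omega> \<theta> \<le> W n \<omega>" using fW elim \<omega> by blast
        have "Z n \<omega> \<le> W n \<omega>" unfolding Z_def using th0S le by (intro cSUP_least) auto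
        moreover have "f n \<omega> theta0 \<le> Z n \<omega>" unfolding Z_def using th0S le
          by (intro cSUP_upper bdd_aboveI2[where M="W n \<omega>"]) auto
        ultimately show "\<bar>Z n \<omega>\<bar> \<le> W n \<omega>" using f0[of n \<omega> theta0] by linarith
      qed
    qed
    define s1 where "s1 n = (SUP i\<in>{1..N n}. measure M {\<omega>\<in>space M.
                 (1 / real (T n)) * (\<Sum>t=1..T n. (norm (x n i t \<omega>))\<^sup>2) \<ge> Mb})" for n
    define s2 where "s2 n = (SUP i\<in>{1..N n}. measure M {\<omega>\<in>space M.
                 norm ((1 / real (T n)) *\<^sub>R (\<Sum>t=1..T n. eps n i t \<omega> *\<^sub>R x n i t \<omega>)) \<ge> e0})" for n
    define r where "r n = real (T n) powr (- \<delta>)" for n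
    have s1l: "(\<lambda>n. s1 n / r n) \<longlonglongrightarrow> 0" using ipart \<delta> unfolding little_o_seq_def s1_def r_def by blast
    have s2l: "(\<lambda>n. s2 n / r n) \<longlonglongrightarrow> 0" using jpart \<delta> e0p unfolding little_o_seq_def s2_def r_def by blast
    have intW: "integral\<^sup>L M (W n) \<le> s1 n + s2 n" if N1: "N n \<ge> 1" for n
    proof -
      have "integral\<^sup>L M (W n) = (1 / real (N n)) * (\<Sum>i=1..N n. measure M (B n i))"
        unfolding W_def
        by (subst integral_mult_right_zero, subst Bochner_Integration.integral_sum)
           (auto simp: Bochner_Integration.integral_indicator Int_absorb2 sets.sets_into_space less_top[symmetric]
             intro!: integrable_real_indicator)
      also have "\<dots> \<le> (1 / real (N n)) * (\<Sum>i=1..N n. s1 n + s2 n)"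
      proof (intro mult_left_mono sum_mono)
        fix i assume i: "i \<in> {1..N n}"
        have "measure M (B n i) \<le> measure M (B1 n i) + measure M (B2 n i)"
          unfolding B_def by (rule measure_subadditive) auto
        moreover have "measure M (B1 n i) \<le> s1 n" unfolding s1_def B1_def
          using i by (intro cSUP_upper) auto
        moreover have "measure M (B2 n i) \<le> s2 n" unfolding s2_def B2_def
          using i by (intro cSUP_upper) auto
        ultimately show "measure M (B n i) \<le> s1 n + s2 n" by linarith
      qed auto
      also have "\<dots> = s1 n + s2 n" using N1 by simp
      finally show ?thesis .
    qed
    show "little_op M Z r" unfolding little_op_def
    proof (intro allI impI)
      fix e :: real assume e: "e > 0"
      have lim: "(\<lambda>n. (s1 n + s2 n) / (e * r n)) \<longlonglongrightarrow> 0"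
      proof -
        have "(\<lambda>n. (s1 n / r n + s2 n / r n) / e) \<longlonglongrightarrow> 0"
          using tendsto_add[OF s1l s2l] by (intro tendsto_divide_zero) simp
        moreover have "(s1 n / r n + s2 n / r n) / e = (s1 n + s2 n) / (e * r n)" for n
          by (simp add: add_divide_distrib divide_divide_eq_left mult.commute)
        ultimately show ?thesis by simp
      qed
      show "(\<lambda>n. outer_prob M {\<omega>\<in>space M. \<bar>Z n \<omega>\<bar> > e * r n}) \<longlonglongrightarrow> 0"
      proof (rule tendsto_sandwich[OF _ _ tendsto_const lim])
        show "eventually (\<lambda>n. 0 \<le> outer_prob M {\<omega>\<in>space M. \<bar>Z n \<omega>\<bar> > e * r n}) sequentially"
          by (intro always_eventually allI outer_prob_nonneg) auto
        show "eventually (\<lambda>n. outer_prob M {\<omega>\<in>space M. \<bar>Z n \<omega>\<bar> > e * r n} \<le> (s1 n + s2 n) / (e * r n)) sequentially"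
          using ZW evT evN
        proof eventually_elim
          case (elim n)
          have rp: "r n > 0" using elim(2) by (simp add: r_def)
          have "outer_prob M {\<omega>\<in>space M. \<bar>Z n \<omega>\<bar> > e * r n} \<le> measure M {\<omega>\<in>space M. W n \<omega> \<ge> e * r n}"
          proof (rule outer_prob_le)
            show "{\<omega>\<in>space M. W n \<omega> \<ge> e * r n} \<in> sets M" by measurable
            show "{\<omega>\<in>space M. \<bar>Z n \<omega>\<bar> > e * r n} \<subseteq> {\<omega>\<in>space M. W n \<omega> \<ge> e * r n}"
              using elim(1) by force
          qed
          also have "\<dots> \<le> integral\<^sup>L M (W n) / (e * r n)"
            using rp e Wi W0 by (intro integral_Markov_inequality_measure[where A="space M"]) auto
          also have "\<dots> \<le> (s1 n + s2 n) / (e * r n)"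
            using intW[OF elim(3)] rp e by (intro divide_right_mono) auto
          finally show ?case .
        qed
      qed
    qed
  qed
qed


end
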